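(* Let $(A,* )$ be an involutive associative algebra, $(M,* )$ an involutive $A$-bimodule, and $T:M\to A$ a relative Rota-Baxter operator on $A$ with respect to $M$. Let $T_t=\sum_{i\ge0}t^iT_i$ (with $T_0=T$) be a formal one-parameter deformation of $T$. Then $T_1\in i\mathrm{Hom}(M,A)$ is a $1$-cocycle in the complex $(i\mathrm{Hom}(M^{\otimes\bullet},A),d_T)$, and its cohomology class in $iH^1_T(M,A)$ depends only on the equivalence class of the deformation $T_t$.
   Context: An involutive associative algebra is an associative algebra $A$ with a linear map $*:A\to A$ satisfying $a^{**}=a$ and $(ab)^*=b^*a^*$; an involutive $A$-bimodule is an $A$-bimodule $M$ with $*:M\to M$, $u^{**}=u$, $(au)^*=u^*a^*$, $(ua)^*=a^*u^*$. A relative Rota-Baxter operator is a linear $T:M\to A$ with $T(u^* )=T(u)^*$ and $T(u)T(v)=T(uT(v)+T(u)v)$ for $u,v\in M$. Notation: $u\circledast v=uT(v)+T(u)v$, $l_T(u,a)=T(u)a-T(ua)$, $r_T(a,u)=aT(u)-T(au)$. Let $i\mathrm{Hom}(M^{\otimes0},A)=\{a\in A\mid a^*=-a\}$ and for $n\ge1$ $i\mathrm{Hom}(M^{\otimes n},A)=\{f\mid f(u_1,\ldots,u_n)^*=(-1)^{\frac{(n-1)(n-2)}{2}}f(u_n^*,\ldots,u_1^* )\}$. The differential: $d_T(a)(u)=l_T(u,a)-r_T(a,u)$, and for $n\ge1$, $(d_Tf)(u_1,\ldots,u_{n+1})=(-1)^n\big[l_T(u_1,f(u_2,\ldots,u_{n+1}))+\sum_{i=1}^n(-1)^if(u_1,\ldots,u_i\circledast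 u_{i+1},\ldots,u_{n+1})+(-1)^{n+1}r_T(f(u_1,\ldots,u_n),u_{n+1})\big]$; $iH^\bullet_T(M,A)$ is the cohomology of $(i\mathrm{Hom}(M^{\otimes\bullet},A),d_T)$. A formal deformation of $T$ is $T_t=\sum_{i\ge0}t^iT_i$, $T_i\in\mathrm{Hom}(M,A)$, $T_0=T$, such that the $\mathbb{K}[[t]]$-linear extension $T_t:M[[t]]\to A[[t]]$ is a relative Rota-Baxter operator on the involutive algebra $A[[t]]$ w.r.t. the involutive bimodule $M[[t]]$ (structures extended $\mathbb{K}[[t]]$-linearly); equivalently $T_k(u^* )=T_k(u)^*$ and $\sum_{i+j=k}T_i(u)T_j(v)=\sum_{i+j=k}T_i(uT_j(v)+T_j(u)v)$ for all $k\ge0$. Two deformations $T_t,T'_t$ are equivalent if there exist $\mathbf a\in A$ with $\mathbf a^*=-\mathbf a$ and linear maps $\phi_j:A\to A$, $\psi_j:M\to M$ ($j\ge2$) commuting with the involutions such that $\phi_t=\mathrm{id}_A+t(\mathrm{ad}^l_{\mathbf a}-\mathrm{ad}^r_{\mathbf a})+\sum_{j\ge2}t^j\phi_j$ and $\psi_t=\mathrm{id}_M+t(l_{\mathbf a}-r_{\mathbf a})+\sum_{j\ge2}t^j\psi_j$ (where $\mathrm{ad}^l_{\mathbf a}(b)=\mathbf ab$, $\mathrm{ad}^r_{\mathbf a}(b)=b\mathbf a$, $l_{\mathbf a}(u)=\mathbf au$, $r_{\mathbf a}(u)=u\mathbf a$) satisfy $\phi_t(ab)=\phi_t(a)\phi_t(b)$,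 $T'_t\circ\psi_t=\phi_t\circ T_t$, $\psi_t(au)=\phi_t(a)\psi_t(u)$, $\psi_t(ua)=\psi_t(u)\phi_t(a)$ for all $a,b\in A$, $u\in M$. *)

theory Defs
  imports Main
begin

definition vspace :: "('k::field \<Rightarrow> 'v::ab_group_add \<Rightarrow> 'v) \<Rightarrow> bool" where
  "vspace sm \<longleftrightarrow>
     (\<forall>c x y. sm c (x + y) = sm c x + sm c y) \<and>
     (\<forall>c d x. sm (c + d) x = sm c x + sm d x) \<and>
     (\<forall>c d x. sm (c * d) x = sm c (sm d x)) \<and>
     (\<forall>x. sm 1 x = x)"

definition lin :: "('k::field \<Rightarrow> 'v::ab_group_add \<Rightarrow> 'v) \<Rightarrow> ('k \<Rightarrow> 'w::ab_group_add \<Rightarrow> 'w)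
                    \<Rightarrow> ('v \<Rightarrow> 'w) \<Rightarrow> bool" where
  "lin sm1 sm2 f \<longleftrightarrow> (\<forall>x y. f (x + y) = f x + f y) \<and> (\<forall>c x. f (sm1 c x) = sm2 c (f x))"

definition inv_algebra ::
  "('k::field \<Rightarrow> 'a::ab_group_add \<Rightarrow> 'a) \<Rightarrow> ('a \<Rightarrow> 'a \<Rightarrow> 'a) \<Rightarrow> ('a \<Rightarrow> 'a) \<Rightarrow> bool" where
  "inv_algebra smA mul st \<longleftrightarrow>
     vspace smA \<and>
     (\<forall>a. lin smA smA (mul a)) \<and> (\<forall>b. lin smA smA (\<lambda>a. mul a b)) \<and>
     (\<forall>a b c. mul (mul a b) c = mul a (mul b c)) \<and>
     lin smA smA st \<and>
     (\<forall>a. st (st a) = a) \<and>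
     (\<forall>a b. st (mul a b) = mul (st b) (st a))"

definition inv_bimodule ::
  "('k::field \<Rightarrow> 'a::ab_group_add \<Rightarrow> 'a) \<Rightarrow> ('a \<Rightarrow> 'a \<Rightarrow> 'a) \<Rightarrow> ('a \<Rightarrow> 'a) \<Rightarrow>
   ('k \<Rightarrow> 'm::ab_group_add \<Rightarrow> 'm) \<Rightarrow> ('a \<Rightarrow> 'm \<Rightarrow> 'm) \<Rightarrow> ('m \<Rightarrow> 'a \<Rightarrow> 'm) \<Rightarrow> ('m \<Rightarrow> 'm) \<Rightarrow> bool" where
  "inv_bimodule smA mul st smM la ra stM \<longleftrightarrow>
     vspace smM \<and>
     (\<forall>a. lin smM smM (la a)) \<and> (\<forall>u. lin smA smM (\<lambda>a. la a u)) \<and>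
     (\<forall>a. lin smM smM (\<lambda>u. ra u a)) \<and> (\<forall>u. lin smA smM (ra u)) \<and>
     (\<forall>a b u. la (mul a b) u = la a (la b u)) \<and>
     (\<forall>a b u. ra u (mul a b) = ra (ra u a) b) \<and>
     (\<forall>a b u. ra (la a u) b = la a (ra u b)) \<and>
     lin smM smM stM \<and>
     (\<forall>u. stM (stM u) = u) \<and>
     (\<forall>a u. stM (la a u) = ra (stM u) (st a)) \<and>
     (\<forall>a u. stM (ra u a) = la (st a) (stM u))"

definition relRB ::
  "('k::field \<Rightarrow> 'a::ab_group_add \<Rightarrow> 'a) \<Rightarrow> ('a \<Rightarrow> 'a \<Rightarrow> 'a) \<Rightarrow> ('a \<Rightarrow> 'a) \<Rightarrow>
   ('k \<Rightarrow> 'm::ab_group_add \<Rightarrow> 'm) \<Rightarrow> ('a \<Rightarrow> 'm \<Rightarrow> 'm) \<Rightarrow> ('m \<Rightarrow> 'a \<Rightarrow> 'm) \<Rightarrow> ('m \<Rightarrow> 'm) \<Rightarrow>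
   ('m \<Rightarrow> 'a) \<Rightarrow> bool" where
  "relRB smA mul st smM la ra stM T \<longleftrightarrow>
     lin smM smA T \<and>
     (\<forall>u. T (stM u) = st (T u)) \<and>
     (\<forall>u v. mul (T u) (T v) = T (ra u (T v) + la (T u) v))"

definition circ_T where "circ_T la ra T u v = ra u (T v) + la (T u) v"
definition l_T where "l_T mul ra T u a = mul (T u) a - T (ra u a)"
definition r_T where "r_T mul la T a u = mul a (T u) - T (la a u)"

text \<open>An n-cochain is represented as a function on lists of arguments of length n
  (values on lists of other lengths are irrelevant). A 0-cochain f is the element f [].\<close>

definition multilin ::
  "('k::field \<Rightarrow> 'm::ab_group_add \<Rightarrow> 'm) \<Rightarrow> ('k \<Rightarrow> 'a::ab_group_add \<Rightarrow> 'a) \<Rightarrow> nat \<Rightarrow> ('m list \<Rightarrow> 'a) \<Rightarrow> bool" where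
  "multilin smM smA n f \<longleftrightarrow>
     (\<forall>xs ys. length xs + length ys + 1 = n \<longrightarrow> lin smM smA (\<lambda>u. f (xs @ u # ys)))"

definition iHom ::
  "('k::field \<Rightarrow> 'm::ab_group_add \<Rightarrow> 'm) \<Rightarrow> ('k \<Rightarrow> 'a::ab_group_add \<Rightarrow> 'a) \<Rightarrow> ('a \<Rightarrow> 'a) \<Rightarrow> ('m \<Rightarrow> 'm)
   \<Rightarrow> nat \<Rightarrow> ('m list \<Rightarrow> 'a) \<Rightarrow> bool" where
  "iHom smM smA st stM n f \<longleftrightarrow>
     (if n = 0 then st (f []) = - f []
      else multilin smM smA n f \<and>
           (\<forall>us. length us = n \<longrightarrow>
              st (f us) = (if even (((n - 1) * (n - 2)) div 2) then f (rev (map stM us))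
                           else - f (rev (map stM us)))))"

definition sgn_mult :: "nat \<Rightarrow> 'a::ab_group_add \<Rightarrow> 'a" where
  "sgn_mult n x = (if even n then x else - x)"

definition dT ::
  "('a::ab_group_add \<Rightarrow> 'a \<Rightarrow> 'a) \<Rightarrow> ('a \<Rightarrow> 'm::ab_group_add \<Rightarrow> 'm) \<Rightarrow> ('m \<Rightarrow> 'a \<Rightarrow> 'm) \<Rightarrow> ('m \<Rightarrow> 'a)
   \<Rightarrow> nat \<Rightarrow> ('m list \<Rightarrow> 'a) \<Rightarrow> ('m list \<Rightarrow> 'a)" where
  "dT mul la ra T n f us =
     (if n = 0 then l_T mul ra T (us ! 0) (f []) - r_T mul la T (f []) (us ! 0)
      else sgn_mult n
        (l_T mul ra T (us ! 0) (f (drop 1 us))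
         + (\<Sum>i\<in>{1..n}. sgn_mult i
              (f (take (i - 1) us @ circ_T la ra T (us ! (i - 1)) (us ! i) # drop (i + 1) us)))
         + sgn_mult (n + 1) (r_T mul la T (f (take n us)) (us ! n))))"

definition cocycle where
  "cocycle smM smA st stM mul la ra T n f \<longleftrightarrow>
     iHom smM smA st stM n f \<and> (\<forall>us. length us = n + 1 \<longrightarrow> dT mul la ra T n f us = 0)"

definition same_class where
  "same_class smM smA st stM mul la ra T n f g \<longleftrightarrow>
     (\<exists>h. iHom smM smA st stM (n - 1) h \<and>
          (\<forall>us. length us = n \<longrightarrow> f us - g us = dT mul la ra T (n - 1) h us))"

definition cochain1 :: "('m \<Rightarrow> 'a) \<Rightarrow> 'm list \<Rightarrow> 'a" where
  "cochain1 f us = f (hd us)"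

text \<open>T_t = \<Sum> t^i Ts i, coefficientwise conditions.\<close>
definition deformation where
  "deformation smA mul st smM la ra stM T Ts \<longleftrightarrow>
     Ts 0 = T \<and>
     (\<forall>k. lin smM smA (Ts k)) \<and>
     (\<forall>k u. Ts k (stM u) = st (Ts k u)) \<and>
     (\<forall>k u v. (\<Sum>i\<le>k. mul (Ts i u) (Ts (k - i) v))
              = (\<Sum>i\<le>k. Ts i (ra u (Ts (k - i) v) + la (Ts (k - i) u) v)))"

definition equiv_deformation where
  "equiv_deformation smA mul st smM la ra stM Ts Ts' \<longleftrightarrow>
     (\<exists>a phi psi.
        st a = - a \<and>
        phi 0 = id \<and> phi 1 = (\<lambda>b. mul a b - mul b a) \<and>
        psi 0 = id \<and> psi 1 = (\<lambda>u. la a u - ra u a) \<and>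
        (\<forall>j\<ge>2. lin smA smA (phi j) \<and> lin smM smM (psi j) \<and>
                (\<forall>b. phi j (st b) = st (phi j b)) \<and> (\<forall>u. psi j (stM u) = stM (psi j u))) \<and>
        (\<forall>k b c. phi k (mul b c) = (\<Sum>i\<le>k. mul (phi i b) (phi (k - i) c))) \<and>
        (\<forall>k u. (\<Sum>i\<le>k. Ts' i (psi (k - i) u)) = (\<Sum>i\<le>k. phi i (Ts (k - i) u))) \<and>
        (\<forall>k b u. psi k (la b u) = (\<Sum>i\<le>k. la (phi i b) (psi (k - i) u))) \<and>
        (\<forall>k b u. psi k (ra u b) = (\<Sum>i\<le>k. ra (psi i u) (phi (k - i) b))))"

end

theory Submission
  imports Defs
begin

lemma add_neg: assumes "\<forall>x y. f (x + y) = f x + f y" shows "f (- x) = - (f (x::'v::ab_group_add)) \<and> f (x - y) = f x - (f y::'w::ab_group_add)"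
proof -
  have "f x = f (x - y) + f y" using assms[rule_format, of "x-y" y] by simp
  hence 1: "f (x - y) = f x - f y" by (simp add: eq_diff_eq)
  have "f 0 = f 0 + f 0" using assms[rule_format, of 0 0] by simp
  hence "f 0 = 0" by simp
  moreover have "f 0 = f (- x) + f x" using assms[rule_format, of "-x" x] by simp
  ultimately have "f (- x) = - f x" by (simp add: eq_neg_iff_add_eq_0)
  with 1 show ?thesis by simp
qed

lemma sum1: "(\<Sum>i\<le>(1::nat). g i) = g 0 + (g 1 :: 'b::comm_monoid_add)"
  by (simp add: atMost_Suc add.commute)

theorem mainTheorem6:
  fixes smA :: "'k::field \<Rightarrow> 'a::ab_group_add \<Rightarrow> 'a" and mul :: "'a \<Rightarrow> 'a \<Rightarrow> 'a"
    and st :: "'a \<Rightarrow> 'a"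
    and smM :: "'k \<Rightarrow> 'm::ab_group_add \<Rightarrow> 'm" and la :: "'a \<Rightarrow> 'm \<Rightarrow> 'm"
    and ra :: "'m \<Rightarrow> 'a \<Rightarrow> 'm" and stM :: "'m \<Rightarrow> 'm"
    and T :: "'m \<Rightarrow> 'a" and Ts :: "nat \<Rightarrow> 'm \<Rightarrow> 'a"
  assumes "inv_algebra smA mul st"
    and "inv_bimodule smA mul st smM la ra stM"
    and "relRB smA mul st smM la ra stM T"
    and "deformation smA mul st smM la ra stM T Ts"
  shows "cocycle smM smA st stM mul la ra T 1 (cochain1 (Ts 1)) \<and>
         (\<forall>Ts'. deformation smA mul st smM la ra stM T Ts' \<and>
                equiv_deformation smA mul st smM la ra stM Ts Ts' \<longrightarrow>
                same_class smM smA st stM mul la ra T 1 (cochain1 (Ts' 1)) (cochain1 (Ts 1)))"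
proof
  have T0: "Ts 0 = T" and linT: "\<And>k. lin smM smA (Ts k)"
    and stT: "\<And>k u. Ts k (stM u) = st (Ts k u)"
    and eqk: "\<And>k u v. (\<Sum>i\<le>k. mul (Ts i u) (Ts (k - i) v))
              = (\<Sum>i\<le>k. Ts i (ra u (Ts (k - i) v) + la (Ts (k - i) u) v))"
    using assms(4) unfolding deformation_def by auto
  have addT: "\<And>k x y. Ts k (x + y) = Ts k x + Ts k y" using linT unfolding lin_def by blast
  have Tadd: "\<And>x y. T (x + y) = T x + T y" using addT[of 0] T0 by simp
  show "cocycle smM smA st stM mul la ra T 1 (cochain1 (Ts 1))"
    unfolding cocycle_def
  proof
    have A: "multilin smM smA 1 (cochain1 (Ts 1))" unfolding multilin_def cochain1_def
      using linT[of 1] by auto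
    have B: "\<forall>us. length us = 1 \<longrightarrow> st (cochain1 (Ts 1) us) = cochain1 (Ts 1) (rev (map stM us))"
    proof (intro allI impI)
      fix us :: "'m list" assume "length us = 1"
      then obtain u where "us = [u]" by (metis One_nat_def length_0_conv length_Suc_conv)
      then show "st (cochain1 (Ts 1) us) = cochain1 (Ts 1) (rev (map stM us))"
        using stT[where k=1] by (simp add: cochain1_def)
    qed
    show "iHom smM smA st stM 1 (cochain1 (Ts 1))"
      unfolding iHom_def using A B by simp
    show "\<forall>us. length us = 1 + 1 \<longrightarrow> dT mul la ra T 1 (cochain1 (Ts 1)) us = 0"
    proof (intro allI impI)
      fix us :: "'m list" assume "length us = 1 + 1"
      then obtain u v where us: "us = [u, v]"
        by (metis One_nat_def Suc_1 length_0_conv length_Suc_conv one_add_one)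
      have e: "mul (T u) (Ts 1 v) + mul (Ts 1 u) (T v)
          = T (ra u (Ts 1 v) + la (Ts 1 u) v) + Ts 1 (ra u (T v) + la (T u) v)"
        using eqk[where k=1 and u=u and v=v] T0 by (simp add: sum1)
      show "dT mul la ra T 1 (cochain1 (Ts 1)) us = 0"
      proof -
        have "dT mul la ra T 1 (cochain1 (Ts 1)) us = - (mul (T u) (Ts 1 v) - T (ra u (Ts 1 v))
             - Ts 1 (ra u (T v) + la (T u) v) + (mul (Ts 1 u) (T v) - T (la (Ts 1 u) v)))"
          unfolding dT_def us cochain1_def sgn_mult_def l_T_def r_T_def circ_T_def by simp
        also have "\<dots> = 0" using e Tadd[of "ra u (Ts 1 v)" "la (Ts 1 u) v"]
          by (simp add: algebra_simps)
        finally show ?thesis .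
      qed
    qed
  qed
  show "\<forall>Ts'. deformation smA mul st smM la ra stM T Ts' \<and>
                equiv_deformation smA mul st smM la ra stM Ts Ts' \<longrightarrow>
                same_class smM smA st stM mul la ra T 1 (cochain1 (Ts' 1)) (cochain1 (Ts 1))"
  proof (intro allI impI)
    fix Ts' assume H: "deformation smA mul st smM la ra stM T Ts' \<and>
                equiv_deformation smA mul st smM la ra stM Ts Ts'"
    have T0': "Ts' 0 = T" using H unfolding deformation_def by auto
    obtain a phi psi where sta: "st a = - a" and p0: "phi 0 = id" and p1: "phi 1 = (\<lambda>b. mul a b - mul b a)"
      and q0: "psi 0 = id" and q1: "psi 1 = (\<lambda>u. la a u - ra u a)"
      and E: "\<And>k u. (\<Sum>i\<le>k. Ts' i (psi (k - i) u)) = (\<Sum>i\<le>k. phi i (Ts (k - i) u))"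
      using H unfolding equiv_deformation_def by blast
    have stlin: "\<forall>x y. st (x + y) = st x + st y" using assms(1) unfolding inv_algebra_def lin_def by blast
    have mlin: "\<forall>x y. mul b (x + y) = mul b x + mul b y" for b using assms(1) unfolding inv_algebra_def lin_def by blast
    have mlin2: "\<forall>x y. mul (x + y) b = mul x b + mul y b" for b using assms(1) unfolding inv_algebra_def lin_def by blast
    have lalin: "\<forall>x y. la (x + y) u = la x u + la y u" for u using assms(2) unfolding inv_bimodule_def lin_def by simp
    have ralin: "\<forall>x y. ra u (x + y) = ra u x + ra u y" for u using assms(2) unfolding inv_bimodule_def lin_def by simp
    have Tl: "\<forall>x y. T (x + y) = T x + T y" using Tadd by blast
    show "same_class smM smA st stM mul la ra T 1 (cochain1 (Ts' 1)) (cochain1 (Ts 1))"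
      unfolding same_class_def
    proof (intro exI[of _ "\<lambda>_. - a"] conjI allI impI)
      show "iHom smM smA st stM (1 - 1) (\<lambda>_. - a)" unfolding iHom_def
        using add_neg[OF stlin] sta by simp
    next
      fix us :: "'m list" assume "length us = 1"
      then obtain u where us: "us = [u]" by (metis One_nat_def length_0_conv length_Suc_conv)
      have e: "T (la a u - ra u a) + Ts' 1 u = Ts 1 u + (mul a (T u) - mul (T u) a)"
        using E[where k=1 and u=u] T0 T0' p0 p1 q0 q1 by (simp add: sum1)
      show "cochain1 (Ts' 1) us - cochain1 (Ts 1) us = dT mul la ra T (1 - 1) (\<lambda>_. - a) us"
      proof -
        have "dT mul la ra T (1 - 1) (\<lambda>_. - a) us = mul (T u) (- a) - T (ra u (- a)) - (mul (- a) (T u) - T (la (- a) u))"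
          unfolding dT_def us l_T_def r_T_def by simp
        also have "\<dots> = - mul (T u) a + T (ra u a) + mul a (T u) - T (la a u)"
          using add_neg[OF Tl, where x="ra u a"] add_neg[OF Tl, where x="la a u"] add_neg[OF mlin[of "T u"], where x=a] add_neg[OF mlin2[of "T u"], where x=a]
            add_neg[OF lalin[of u], where x=a] add_neg[OF ralin[of u], where x=a] by simp
        also have "\<dots> = Ts' 1 u - Ts 1 u"
          using e add_neg[OF Tl, where x="la a u" and y="ra u a"] by (simp add: algebra_simps)
        finally show ?thesis unfolding us cochain1_def by simp
      qed
    qed
  qed
qed

end
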